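(* Let $1\le p,q\le\infty$, $s_1,s_2\in\mathbb{R}$ and $\sigma\in M^{p,q}_{v_{s_1,s_2}\otimes1}(\mathbb{R}^{2d})$. Define $\sigma^*(x,\eta)=\overline{\sigma(\eta,x)}$, $(x,\eta)\in\mathbb{R}^{2d}$. Then $\sigma^*\in M^{p,q}_{v_{s_2,s_1}\otimes1}(\mathbb{R}^{2d})$.
   Context: $V_\Psi\sigma(z,\zeta)=\int_{\mathbb{R}^{2d}}e^{-2\pi i\zeta\cdot y}\sigma(y)\overline{\Psi(y-z)}dy$ for $\Psi\in\mathcal{S}(\mathbb{R}^{2d})\setminus\{0\}$. $\langle x\rangle=(1+|x|^2)^{1/2}$. $M^{p,q}_{v_{s_1,s_2}\otimes1}(\mathbb{R}^{2d})$ is the space of $\sigma\in\mathcal{S}'(\mathbb{R}^{2d})$ with $\left(\int_{\mathbb{R}^{2d}}\left(\int_{\mathbb{R}^{2d}}|V_\Psi\sigma(z_1,z_2,\zeta)|^p\langle z_1\rangle^{ps_1}\langle z_2\rangle^{ps_2}dz_1dz_2\right)^{q/p}d\zeta\right)^{1/q}<\infty$ (usual modifications for infinite indices); this does not depend on the choice of $\Psi$. *)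

theory Defs
  imports "HOL-Analysis.Analysis" "HOL-Probability.Essential_Supremum"
begin

fun diter :: "'a list \<Rightarrow> ('a::euclidean_space \<Rightarrow> complex) \<Rightarrow> 'a \<Rightarrow> complex" where
  "diter [] f = f"
| "diter (v # vs) f = (\<lambda>x. frechet_derivative (diter vs f) (at x) v)"

definition schwartz :: "('a::euclidean_space \<Rightarrow> complex) \<Rightarrow> bool" where
  "schwartz f \<longleftrightarrow>
     (\<forall>vs x. diter vs f differentiable (at x)) \<and>
     (\<forall>vs (N::nat). bounded (range (\<lambda>x. (1 + norm x) ^ N * norm (diter vs f x))))"

definition schwartz_seminorm :: "nat \<Rightarrow> ('a::euclidean_space \<Rightarrow> complex) \<Rightarrow> real" where
  "schwartz_seminorm N f =
     (SUP xv \<in> UNIV \<times> {vs. set vs \<subseteq> Basis \<and> length vs \<le> N}.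
        (1 + norm (fst xv)) ^ N * norm (diter (snd xv) f (fst xv)))"

text \<open>Tempered distributions: linear functionals on the Schwartz space, continuous
  w.r.t. the Schwartz topology (values on non-Schwartz functions are irrelevant).\<close>
definition tempered :: "(('a::euclidean_space \<Rightarrow> complex) \<Rightarrow> complex) \<Rightarrow> bool" where
  "tempered T \<longleftrightarrow>
     (\<forall>\<phi> \<psi>. schwartz \<phi> \<longrightarrow> schwartz \<psi> \<longrightarrow> T (\<lambda>x. \<phi> x + \<psi> x) = T \<phi> + T \<psi>) \<and>
     (\<forall>c \<phi>. schwartz \<phi> \<longrightarrow> T (\<lambda>x. c * \<phi> x) = c * T \<phi>) \<and>
     (\<exists>C N. \<forall>\<phi>. schwartz \<phi> \<longrightarrow> norm (T \<phi>) \<le> C * schwartz_seminorm N \<phi>)"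

type_synonym 'd R2d = "(real^'d) \<times> (real^'d)"

definition stft :: "('d::finite R2d \<Rightarrow> complex) \<Rightarrow> (('d R2d \<Rightarrow> complex) \<Rightarrow> complex)
                    \<Rightarrow> 'd R2d \<Rightarrow> 'd R2d \<Rightarrow> complex" where
  "stft \<Psi> \<sigma> z \<zeta> = \<sigma> (\<lambda>y. exp (- 2 * pi * \<i> * complex_of_real (\<zeta> \<bullet> y)) * cnj (\<Psi> (y - z)))"

definition epow :: "ennreal \<Rightarrow> real \<Rightarrow> ennreal" where
  "epow x r = (if x = \<infinity> then \<infinity> else ennreal (enn2real x powr r))"

definition lpnorm :: "ennreal \<Rightarrow> ('a::euclidean_space \<Rightarrow> ennreal) \<Rightarrow> ennreal" where
  "lpnorm p f = (if p = \<infinity> then esssup lborel f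
                 else epow (\<integral>\<^sup>+ x. epow (f x) (enn2real p) \<partial>lborel) (1 / enn2real p))"

definition jbr :: "'a::real_normed_vector \<Rightarrow> real" where
  "jbr x = sqrt (1 + norm x ^ 2)"

text \<open>Membership in M^{p,q}_{v_{s1,s2} (x) 1}(R^{2d}).  The space does not depend on the
  window, so we ask for some nonzero Schwartz window.\<close>
definition modsp :: "ennreal \<Rightarrow> ennreal \<Rightarrow> real \<Rightarrow> real \<Rightarrow>
                     (('d::finite R2d \<Rightarrow> complex) \<Rightarrow> complex) set" where
  "modsp p q s1 s2 = {\<sigma>. tempered \<sigma> \<and>
     (\<exists>\<Psi>. schwartz \<Psi> \<and> \<Psi> \<noteq> (\<lambda>_. 0) \<and>
        lpnorm q (\<lambda>\<zeta>. lpnorm p (\<lambda>z.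
           ennreal (norm (stft \<Psi> \<sigma> z \<zeta>) * jbr (fst z) powr s1 * jbr (snd z) powr s2)))
        < \<infinity>)}"

text \<open>sigma^*(x,eta) = conj(sigma(eta,x)), extended to tempered distributions:
  <sigma^*, phi> = conj <sigma, (a,b) |-> conj(phi(b,a))>.\<close>
definition dist_adj :: "(('a \<times> 'a \<Rightarrow> complex) \<Rightarrow> complex) \<Rightarrow> (('a \<times> 'a \<Rightarrow> complex) \<Rightarrow> complex)" where
  "dist_adj \<sigma> = (\<lambda>\<phi>. cnj (\<sigma> (\<lambda>(a, b). cnj (\<phi> (b, a)))))"

end

theory Submission
  imports Defs
begin

lemma nn_inv_le:
  fixes T :: "'a::euclidean_space \<Rightarrow> 'a"
  assumes Tm: "T \<in> measurable lborel lborel" and TT: "\<And>x. T (T x) = x"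
    and D: "distr lborel lborel T = lborel"
  shows "(\<integral>\<^sup>+ x. f (T x) \<partial>lborel) \<le> integral\<^sup>N lborel f"
  unfolding nn_integral_def[of lborel "\<lambda>x. f (T x)"]
proof (rule SUP_least, clarify)
  fix g assume g: "simple_function lborel g" "g \<le> (\<lambda>x. f (T x))"
  have gm: "g \<in> borel_measurable lborel" using g(1) by (rule borel_measurable_simple_function)
  have gTm: "(\<lambda>y. g (T y)) \<in> borel_measurable lborel"
    using measurable_comp[OF Tm gm] by (simp add: o_def)
  have "integral\<^sup>S lborel g = integral\<^sup>N lborel g" using nn_integral_eq_simple_integral[OF g(1)] by simp
  also have "\<dots> = (\<integral>\<^sup>+ x. g (T (T x)) \<partial>lborel)" by (simp add: TT)
  also have "\<dots> = integral\<^sup>N (distr lborel lborel T) (\<lambda>y. g (T y))"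
    by (rule nn_integral_distr[symmetric]) (use Tm gTm in auto)
  also have "\<dots> = (\<integral>\<^sup>+ y. g (T y) \<partial>lborel)" by (simp add: D)
  also have "\<dots> \<le> integral\<^sup>N lborel f"
    by (rule nn_integral_mono) (metis TT g(2) le_fun_def)
  finally show "integral\<^sup>S lborel g \<le> integral\<^sup>N lborel f" .
qed

lemma nn_inv:
  fixes T :: "'a::euclidean_space \<Rightarrow> 'a"
  assumes Tm: "T \<in> measurable lborel lborel" and TT: "\<And>x. T (T x) = x"
    and D: "distr lborel lborel T = lborel"
  shows "(\<integral>\<^sup>+ x. f (T x) \<partial>lborel) = integral\<^sup>N lborel f"
proof (rule antisym)
  show "(\<integral>\<^sup>+ x. f (T x) \<partial>lborel) \<le> integral\<^sup>N lborel f" by (rule nn_inv_le[OF assms])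
  have "(\<integral>\<^sup>+ x. f (T (T x)) \<partial>lborel) \<le> (\<integral>\<^sup>+ x. f (T x) \<partial>lborel)"
    by (rule nn_inv_le[OF assms, of "\<lambda>x. f (T x)"])
  thus "integral\<^sup>N lborel f \<le> (\<integral>\<^sup>+ x. f (T x) \<partial>lborel)" by (simp add: TT)
qed

lemma ae_inv_le:
  fixes T :: "'a::euclidean_space \<Rightarrow> 'a"
  assumes Tm: "T \<in> measurable lborel lborel" and TT: "\<And>x. T (T x) = x"
    and D: "distr lborel lborel T = lborel"
  assumes "AE x in lborel. P x" shows "AE x in lborel. P (T x)"
proof -
  from assms(4) obtain N where N: "{x \<in> space lborel. \<not> P x} \<subseteq> N" "emeasure lborel N = 0" "N \<in> sets lborel"
    by (rule AE_E)
  have "emeasure lborel (T -` N \<inter> space lborel) = emeasure (distr lborel lborel T) N"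
    using N(3) Tm by (simp add: emeasure_distr)
  also have "\<dots> = 0" using D N(2) by simp
  finally have z: "emeasure lborel (T -` N \<inter> space lborel) = 0" .
  have s: "T -` N \<inter> space lborel \<in> sets lborel" using Tm N(3) by (rule measurable_sets)
  show ?thesis by (rule AE_I[OF _ z s]) (use N(1) in auto)
qed

lemma filtermap_ae_inv:
  fixes T :: "'a::euclidean_space \<Rightarrow> 'a"
  assumes Tm: "T \<in> measurable lborel lborel" and TT: "\<And>x. T (T x) = x"
    and D: "distr lborel lborel T = lborel"
  shows "filtermap T (ae_filter lborel) = ae_filter lborel"
proof (rule filter_eqI)
  fix P
  show "eventually P (filtermap T (ae_filter lborel)) = eventually P (ae_filter lborel)"
    unfolding eventually_filtermap
  proof
    assume "AE x in lborel. P (T x)"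
    from ae_inv_le[OF assms this] show "AE x in lborel. P x" by (simp add: TT)
  qed (rule ae_inv_le[OF assms])
qed

lemma esssup_inv:
  fixes T :: "'a::euclidean_space \<Rightarrow> 'a" and f :: "'a \<Rightarrow> ennreal"
  assumes Tm: "T \<in> measurable lborel lborel" and TT: "\<And>x. T (T x) = x"
    and D: "distr lborel lborel T = lborel"
  shows "esssup lborel (\<lambda>x. f (T x)) = esssup lborel f"
proof (cases "f \<in> borel_measurable lborel")
  case True
  hence m: "(\<lambda>x. f (T x)) \<in> borel_measurable lborel"
    using measurable_comp[OF Tm True] by (simp add: o_def)
  have inj: "inj T" by (metis TT injI)
  show ?thesis using True m
    by (simp add: esssup_def Limsup_filtermap_eq[OF inj, symmetric] filtermap_ae_inv[OF assms])
next
  case False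
  have "(\<lambda>x. f (T x)) \<notin> borel_measurable lborel"
  proof
    assume "(\<lambda>x. f (T x)) \<in> borel_measurable lborel"
    from measurable_comp[OF Tm this] have "(\<lambda>x. f (T (T x))) \<in> borel_measurable lborel" by (simp add: o_def)
    with False show False by (simp add: TT)
  qed
  with False show ?thesis by (simp add: esssup_def)
qed

lemma lpnorm_inv:
  fixes T :: "'a::euclidean_space \<Rightarrow> 'a"
  assumes Tm: "T \<in> measurable lborel lborel" and TT: "\<And>x. T (T x) = x"
    and D: "distr lborel lborel T = lborel"
  shows "lpnorm p (\<lambda>x. f (T x)) = lpnorm p f"
  unfolding lpnorm_def using esssup_inv[OF assms] nn_inv[OF assms, of "\<lambda>x. epow (f x) (enn2real p)"]
  by simp


definition sw :: "'d::finite R2d \<Rightarrow> 'd R2d" where "sw y = (snd y, fst y)"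

lemma sw_sw[simp]: "sw (sw y) = y" by (simp add: sw_def)

lemma sw_meas: "sw \<in> measurable lborel lborel"
  unfolding sw_def measurable_lborel1 measurable_lborel2
  by (intro borel_measurable_continuous_onI continuous_intros)

lemma sw_distr: "distr lborel lborel (sw :: 'd::finite R2d \<Rightarrow> _) = lborel"
proof -
  have "lborel \<Otimes>\<^sub>M lborel = distr (lborel \<Otimes>\<^sub>M lborel) (lborel \<Otimes>\<^sub>M lborel) (\<lambda>(x::real^'d, y::real^'d). (y, x))"
    by (rule lborel_pair.distr_pair_swap)
  hence "(lborel :: 'd R2d measure) = distr lborel lborel (\<lambda>(x, y). (y, x))" by (simp add: lborel_prod)
  moreover have "(\<lambda>(x::real^'d, y::real^'d). (y, x)) = sw" by (auto simp: sw_def fun_eq_iff)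
  ultimately show ?thesis by simp
qed

lemma um_meas: "(uminus :: 'a::euclidean_space \<Rightarrow> 'a) \<in> measurable lborel lborel"
  by measurable

lemma um_distr: "distr lborel lborel (uminus :: 'a::euclidean_space \<Rightarrow> 'a) = lborel"
proof -
  have "(lborel :: 'a measure) = density (distr lborel borel (\<lambda>x. 0 + (-1::real) *\<^sub>R x)) (\<lambda>_. \<bar>-1::real\<bar>^DIM('a))"
    by (rule lborel_affine) simp
  hence e: "(lborel :: 'a measure) = distr lborel borel uminus" by (simp add: density_1)
  have "distr lborel lborel (uminus :: 'a \<Rightarrow> 'a) = distr lborel borel uminus"
    by (rule measure_eqI) (auto simp: emeasure_distr)
  with e show ?thesis by simp
qed


lemma diter_adj:
  fixes L :: "'a::euclidean_space \<Rightarrow> 'a" and \<phi> :: "'a \<Rightarrow> complex"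
  assumes L: "bounded_linear L" and d: "\<And>vs x. diter vs \<phi> differentiable (at x)"
  shows "diter vs (\<lambda>y. cnj (\<phi> (L y))) = (\<lambda>x. cnj (diter (map L vs) \<phi> (L x)))"
proof (induction vs)
  case Nil
  then show ?case by simp
next
  case (Cons v vs)
  show ?case
  proof (rule ext)
    fix x
    let ?h = "diter (map L vs) \<phi>"
    have hd: "(?h has_derivative frechet_derivative ?h (at (L x))) (at (L x))"
      using d frechet_derivative_works by blast
    have Ld: "(L has_derivative L) (at x)" using L by (rule bounded_linear_imp_has_derivative)
    have c1: "((\<lambda>y. ?h (L y)) has_derivative (\<lambda>v. frechet_derivative ?h (at (L x)) (L v))) (at x)"
      using has_derivative_compose[OF Ld hd] by (simp add: o_def)
    have c2: "((\<lambda>y. cnj (?h (L y))) has_derivative (\<lambda>v. cnj (frechet_derivative ?h (at (L x)) (L v)))) (at x)"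
      using bounded_linear.has_derivative[OF bounded_linear_cnj c1] .
    show "diter (v # vs) (\<lambda>y. cnj (\<phi> (L y))) x = cnj (diter (map L (v # vs)) \<phi> (L x))"
    proof -
      have e: "frechet_derivative (\<lambda>y. cnj (?h (L y))) (at x) v = cnj (frechet_derivative ?h (at (L x)) (L v))"
        using fun_cong[OF frechet_derivative_at[OF c2], of v] by simp
      show ?thesis by (simp add: Cons.IH e)
    qed
  qed
qed

lemma schwartz_adj:
  fixes L :: "'a::euclidean_space \<Rightarrow> 'a" and \<phi> :: "'a \<Rightarrow> complex"
  assumes L: "bounded_linear L" and n: "\<And>x. norm (L x) = norm x" and s: "schwartz \<phi>"
  shows "schwartz (\<lambda>y. cnj (\<phi> (L y)))"
proof -
  have d: "\<And>vs x. diter vs \<phi> differentiable (at x)" and b: "\<And>vs N. bounded (range (\<lambda>x. (1 + norm x) ^ N * norm (diter vs \<phi> x)))"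
    using s unfolding schwartz_def by auto
  note eq = diter_adj[OF L d]
  have "diter vs (\<lambda>y. cnj (\<phi> (L y))) differentiable (at x)" for vs x
  proof -
    obtain D where hd: "(diter (map L vs) \<phi> has_derivative D) (at (L x))"
      using d unfolding differentiable_def by blast
    have Ld: "(L has_derivative L) (at x)" using L by (rule bounded_linear_imp_has_derivative)
    have c1: "((\<lambda>y. diter (map L vs) \<phi> (L y)) has_derivative (\<lambda>v. D (L v))) (at x)"
      using has_derivative_compose[OF Ld hd] by (simp add: o_def)
    have "((\<lambda>y. cnj (diter (map L vs) \<phi> (L y))) has_derivative (\<lambda>v. cnj (D (L v)))) (at x)"
      using bounded_linear.has_derivative[OF bounded_linear_cnj c1] .
    hence "(\<lambda>y. cnj (diter (map L vs) \<phi> (L y))) differentiable (at x)"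
      unfolding differentiable_def by blast
    thus ?thesis by (simp add: eq)
  qed
  moreover have "bounded (range (\<lambda>x. (1 + norm x) ^ N * norm (diter vs (\<lambda>y. cnj (\<phi> (L y))) x)))" for vs N
  proof (rule bounded_subset[OF b[where vs="map L vs" and N=N]])
    show "range (\<lambda>x. (1 + norm x) ^ N * norm (diter vs (\<lambda>y. cnj (\<phi> (L y))) x))
      \<subseteq> range (\<lambda>x. (1 + norm x) ^ N * norm (diter (map L vs) \<phi> x))"
    proof clarify
      fix x
      show "(1 + norm x) ^ N * norm (diter vs (\<lambda>y. cnj (\<phi> (L y))) x) \<in> range (\<lambda>x. (1 + norm x) ^ N * norm (diter (map L vs) \<phi> x))"
        by (rule image_eqI[of _ _ "L x"]) (simp_all add: eq n)
    qed
  qed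
  ultimately show ?thesis unfolding schwartz_def by blast
qed

lemma seminorm_adj:
  fixes L :: "'a::euclidean_space \<Rightarrow> 'a" and \<phi> :: "'a \<Rightarrow> complex"
  assumes L: "bounded_linear L" and n: "\<And>x. norm (L x) = norm x" and s: "schwartz \<phi>"
    and LL: "\<And>x. L (L x) = x" and B: "\<And>b. b \<in> Basis \<Longrightarrow> L b \<in> Basis"
  shows "schwartz_seminorm N (\<lambda>y. cnj (\<phi> (L y))) = schwartz_seminorm N \<phi>"
proof -
  have d: "\<And>vs x. diter vs \<phi> differentiable (at x)" using s unfolding schwartz_def by auto
  note eq = diter_adj[OF L d]
  let ?I = "UNIV \<times> {vs. set vs \<subseteq> Basis \<and> length vs \<le> N}"
  let ?g = "\<lambda>xv::'a \<times> 'a list. (L (fst xv), map L (snd xv))"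
  have gI: "?g xv \<in> ?I" if "xv \<in> ?I" for xv using that B by auto
  have gg: "?g (?g xv) = xv" for xv by (cases xv) (simp add: LL map_idI)
  have t: "(1 + norm (fst xv)) ^ N * norm (diter (snd xv) (\<lambda>y. cnj (\<phi> (L y))) (fst xv))
        = (1 + norm (fst (?g xv))) ^ N * norm (diter (snd (?g xv)) \<phi> (fst (?g xv)))" for xv
    by (simp add: eq n)
  have "(\<lambda>xv. (1 + norm (fst xv)) ^ N * norm (diter (snd xv) (\<lambda>y. cnj (\<phi> (L y))) (fst xv))) ` ?I
      = (\<lambda>xv. (1 + norm (fst xv)) ^ N * norm (diter (snd xv) \<phi> (fst xv))) ` ?I"
  proof (rule set_eqI, rule iffI)
    fix r assume "r \<in> (\<lambda>xv. (1 + norm (fst xv)) ^ N * norm (diter (snd xv) (\<lambda>y. cnj (\<phi> (L y))) (fst xv))) ` ?I"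
    then obtain xv where "xv \<in> ?I" "r = (1 + norm (fst xv)) ^ N * norm (diter (snd xv) (\<lambda>y. cnj (\<phi> (L y))) (fst xv))" by blast
    thus "r \<in> (\<lambda>xv. (1 + norm (fst xv)) ^ N * norm (diter (snd xv) \<phi> (fst xv))) ` ?I"
      using gI t by blast
  next
    fix r assume "r \<in> (\<lambda>xv. (1 + norm (fst xv)) ^ N * norm (diter (snd xv) \<phi> (fst xv))) ` ?I"
    then obtain xv where "xv \<in> ?I" "r = (1 + norm (fst xv)) ^ N * norm (diter (snd xv) \<phi> (fst xv))" by blast
    thus "r \<in> (\<lambda>xv. (1 + norm (fst xv)) ^ N * norm (diter (snd xv) (\<lambda>y. cnj (\<phi> (L y))) (fst xv))) ` ?I"
      using gI[of xv] t[of "?g xv"] gg[of xv] by (intro image_eqI[of _ _ "?g xv"]) auto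
  qed
  thus ?thesis unfolding schwartz_seminorm_def by simp
qed


lemma sw_bl: "bounded_linear (sw :: 'd::finite R2d \<Rightarrow> _)"
  unfolding sw_def by (intro bounded_linear_Pair bounded_linear_fst bounded_linear_snd)

lemma sw_norm: "norm (sw x) = norm x"
  by (cases x) (simp add: sw_def norm_Pair add.commute)

lemma sw_basis: "b \<in> Basis \<Longrightarrow> sw b \<in> (Basis :: 'd::finite R2d set)"
  by (auto simp: sw_def Basis_prod_def)

lemma adj_eq: "dist_adj \<sigma> \<phi> = cnj (\<sigma> (\<lambda>y. cnj (\<phi> (sw y))))"
proof -
  have "(\<lambda>(a,b). cnj (\<phi> (b,a))) = (\<lambda>y. cnj (\<phi> (sw y)))" by (auto simp: sw_def fun_eq_iff)
  thus ?thesis unfolding dist_adj_def by simp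
qed

lemma stft_adj:
  fixes \<Psi> :: "'d::finite R2d \<Rightarrow> complex"
  shows "stft (\<lambda>y. cnj (\<Psi> (sw y))) (dist_adj \<sigma>) z \<zeta> = cnj (stft \<Psi> \<sigma> (sw z) (- sw \<zeta>))"
proof -
  have "(\<lambda>y. cnj (exp (- 2 * pi * \<i> * complex_of_real (\<zeta> \<bullet> sw y)) * cnj (cnj (\<Psi> (sw (sw y - z))))))
      = (\<lambda>y. exp (- 2 * pi * \<i> * complex_of_real ((- sw \<zeta>) \<bullet> y)) * cnj (\<Psi> (y - sw z)))"
  proof
    fix y
    have i: "\<zeta> \<bullet> sw y = sw \<zeta> \<bullet> y" by (simp add: sw_def inner_Pair_0 inner_prod_def add.commute inner_commute)
    have s: "sw (sw y - z) = y - sw z" by (cases y, cases z) (simp add: sw_def)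
    show "cnj (exp (- 2 * pi * \<i> * complex_of_real (\<zeta> \<bullet> sw y)) * cnj (cnj (\<Psi> (sw (sw y - z)))))
      = exp (- 2 * pi * \<i> * complex_of_real ((- sw \<zeta>) \<bullet> y)) * cnj (\<Psi> (y - sw z))"
      by (simp add: i s exp_cnj)
  qed
  thus ?thesis unfolding stft_def adj_eq by simp
qed

theorem lemma2p10:
  fixes p q :: ennreal and s1 s2 :: real
    and \<sigma> :: "('d::finite R2d \<Rightarrow> complex) \<Rightarrow> complex"
  assumes "1 \<le> p" and "1 \<le> q"
    and "\<sigma> \<in> modsp p q s1 s2"
  shows "dist_adj \<sigma> \<in> modsp p q s2 s1"
proof -
  from assms(3) obtain \<Psi> where tmp: "tempered \<sigma>" and Ps: "schwartz \<Psi>" "\<Psi> \<noteq> (\<lambda>_. 0)"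
    and fin: "lpnorm q (\<lambda>\<zeta>. lpnorm p (\<lambda>z.
           ennreal (norm (stft \<Psi> \<sigma> z \<zeta>) * jbr (fst z) powr s1 * jbr (snd z) powr s2))) < \<infinity>"
    unfolding modsp_def by blast
  define G where "G z \<zeta> = ennreal (norm (stft \<Psi> \<sigma> z \<zeta>) * jbr (fst z) powr s1 * jbr (snd z) powr s2)" for z \<zeta>
  define H where "H \<zeta> = lpnorm p (\<lambda>z. G z \<zeta>)" for \<zeta>
  have "lpnorm q (\<lambda>\<zeta>. lpnorm p (\<lambda>z.
           ennreal (norm (stft (\<lambda>y. cnj (\<Psi> (sw y))) (dist_adj \<sigma>) z \<zeta>) * jbr (fst z) powr s2 * jbr (snd z) powr s1)))
      = lpnorm q (\<lambda>\<zeta>. lpnorm p (\<lambda>z. G (sw z) (- sw \<zeta>)))"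
    unfolding stft_adj G_def by (simp add: sw_def mult.commute mult.left_commute)
  also have "\<dots> = lpnorm q (\<lambda>\<zeta>. H (- sw \<zeta>))"
    unfolding H_def by (simp add: lpnorm_inv[OF sw_meas sw_sw sw_distr, of p "\<lambda>z. G z _"])
  also have "\<dots> = lpnorm q (\<lambda>u. H (- u))"
    using lpnorm_inv[OF sw_meas sw_sw sw_distr, of q "\<lambda>u. H (- u)"] by simp
  also have "\<dots> = lpnorm q H"
    by (rule lpnorm_inv[OF um_meas _ um_distr]) simp
  finally have finn: "lpnorm q (\<lambda>\<zeta>. lpnorm p (\<lambda>z.
           ennreal (norm (stft (\<lambda>y. cnj (\<Psi> (sw y))) (dist_adj \<sigma>) z \<zeta>) * jbr (fst z) powr s2 * jbr (snd z) powr s1))) < \<infinity>"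
    using fin unfolding H_def G_def by simp
  note sa = schwartz_adj[OF sw_bl sw_norm]
  note sn = seminorm_adj[OF sw_bl sw_norm _ sw_sw sw_basis]
  have "tempered (dist_adj \<sigma>)"
  proof -
    from tmp have A: "\<And>\<phi> \<psi>. schwartz \<phi> \<Longrightarrow> schwartz \<psi> \<Longrightarrow> \<sigma> (\<lambda>x. \<phi> x + \<psi> x) = \<sigma> \<phi> + \<sigma> \<psi>"
      and M: "\<And>c \<phi>. schwartz \<phi> \<Longrightarrow> \<sigma> (\<lambda>x. c * \<phi> x) = c * \<sigma> \<phi>"
      and "\<exists>C N. \<forall>\<phi>. schwartz \<phi> \<longrightarrow> norm (\<sigma> \<phi>) \<le> C * schwartz_seminorm N \<phi>"
      unfolding tempered_def by auto
    then obtain C N where B: "\<And>\<phi>. schwartz \<phi> \<Longrightarrow> norm (\<sigma> \<phi>) \<le> C * schwartz_seminorm N \<phi>" by blast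
    have "dist_adj \<sigma> (\<lambda>x. \<phi> x + \<psi> x) = dist_adj \<sigma> \<phi> + dist_adj \<sigma> \<psi>"
      if "schwartz \<phi>" "schwartz \<psi>" for \<phi> \<psi>
      using A[OF sa[OF that(1)] sa[OF that(2)]] by (simp add: adj_eq)
    moreover have "dist_adj \<sigma> (\<lambda>x. c * \<phi> x) = c * dist_adj \<sigma> \<phi>" if "schwartz \<phi>" for c \<phi>
      using M[OF sa[OF that], of "cnj c"] by (simp add: adj_eq)
    moreover have "norm (dist_adj \<sigma> \<phi>) \<le> C * schwartz_seminorm N \<phi>" if "schwartz \<phi>" for \<phi>
      using B[OF sa[OF that]] sn[OF that] by (simp add: adj_eq)
    ultimately show ?thesis unfolding tempered_def by blast
  qed
  moreover have "schwartz (\<lambda>y. cnj (\<Psi> (sw y)))" using sa[OF Ps(1)] .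
  moreover have "(\<lambda>y. cnj (\<Psi> (sw y))) \<noteq> (\<lambda>_. 0)"
  proof
    assume "(\<lambda>y. cnj (\<Psi> (sw y))) = (\<lambda>_. 0)"
    hence "\<And>y. \<Psi> (sw (sw y)) = 0" by (metis complex_cnj_zero_iff)
    with Ps(2) show False by auto
  qed
  moreover note finn
  ultimately show ?thesis unfolding modsp_def by blast
qed

end
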